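(* For all integers $1\le t\le n$, both the $t$-path ideal $I_t(L_n)$ and its Alexander dual $I_t(L_n)^{\vee}$ are normally torsion-free ideals of $S=K[x_1,\ldots,x_n]$.
   Context: $K$ is a field, $S=K[x_1,\ldots,x_n]$. $L_n$ is the line graph on vertices $x_1,\ldots,x_n$ with edges $\{x_j,x_{j+1}\}$, $j=1,\ldots,n-1$. The $t$-path ideal is $I_t(L_n)=(u_1,\ldots,u_{n-t+1})$ with $u_i=x_ix_{i+1}\cdots x_{i+t-1}$. For a squarefree monomial ideal $I$ whose minimal generators are $x_{G_1},\ldots,x_{G_m}$ (with $x_G=\prod_{i\in G}x_i$), the Alexander dual $I^\vee$ is the ideal generated by all $x_C$ with $C\subseteq[n]$ satisfying $C\cap G_j\ne\emptyset$ for all $j$ (vertex covers). An ideal $I$ is normally torsion-free if $\mathrm{Ass}(S/I^s)=\mathrm{Ass}(S/I)$ for all $s\ge1$. *)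

theory Defs
  imports "HOL-Library.Poly_Mapping"
begin

type_synonym 'k mpoly = "(nat \<Rightarrow>\<^sub>0 nat) \<Rightarrow>\<^sub>0 'k"

definition polyring :: "nat \<Rightarrow> 'k::field mpoly set" where
  "polyring n = {p. \<forall>m \<in> Poly_Mapping.keys p. Poly_Mapping.keys m \<subseteq> {1..n}}"

definition var :: "nat \<Rightarrow> 'k::field mpoly" where
  "var i = Poly_Mapping.single (Poly_Mapping.single i 1) 1"

definition xmon :: "nat set \<Rightarrow> 'k::field mpoly" where
  "xmon G = (\<Prod>i\<in>G. var i)"

definition gen_ideal :: "nat \<Rightarrow> 'k::field mpoly set \<Rightarrow> 'k mpoly set" where
  "gen_ideal n A = {p. \<exists>F c. finite F \<and> F \<subseteq> A \<and> (\<forall>a\<in>F. c a \<in> polyring n)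
                           \<and> p = (\<Sum>a\<in>F. c a * a)}"

definition is_ideal :: "nat \<Rightarrow> 'k::field mpoly set \<Rightarrow> bool" where
  "is_ideal n I \<longleftrightarrow> I \<subseteq> polyring n \<and> 0 \<in> I \<and> (\<forall>a\<in>I. \<forall>b\<in>I. a + b \<in> I)
                    \<and> (\<forall>r\<in>polyring n. \<forall>a\<in>I. r * a \<in> I)"

definition is_prime_ideal :: "nat \<Rightarrow> 'k::field mpoly set \<Rightarrow> bool" where
  "is_prime_ideal n P \<longleftrightarrow> is_ideal n P \<and> P \<noteq> polyring n
     \<and> (\<forall>a\<in>polyring n. \<forall>b\<in>polyring n. a * b \<in> P \<longrightarrow> a \<in> P \<or> b \<in> P)"

definition ideal_pow :: "nat \<Rightarrow> 'k::field mpoly set \<Rightarrow> nat \<Rightarrow> 'k mpoly set" where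
  "ideal_pow n I s = gen_ideal n {\<Prod>i<s. f i | f. \<forall>i<s. f i \<in> I}"

definition Ass :: "nat \<Rightarrow> 'k::field mpoly set \<Rightarrow> 'k mpoly set set" where
  "Ass n I = {P. is_prime_ideal n P \<and> (\<exists>f\<in>polyring n. P = {g \<in> polyring n. g * f \<in> I})}"

definition normally_torsion_free :: "nat \<Rightarrow> 'k::field mpoly set \<Rightarrow> bool" where
  "normally_torsion_free n I \<longleftrightarrow> (\<forall>s\<ge>1. Ass n (ideal_pow n I s) = Ass n I)"

definition path_ideal :: "nat \<Rightarrow> nat \<Rightarrow> 'k::field mpoly set" where
  "path_ideal n t = gen_ideal n {xmon {i..i+t-1} | i. 1 \<le> i \<and> i \<le> n - t + 1}"

text \<open>Alexander dual of the squarefree monomial ideal whose minimal generators are x_G, G in Gs: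
generated by all x_C, C \<subseteq> [n], C meeting every G.\<close>
definition alexander_dual :: "nat \<Rightarrow> nat set set \<Rightarrow> 'k::field mpoly set" where
  "alexander_dual n Gs = gen_ideal n {xmon C | C. C \<subseteq> {1..n} \<and> (\<forall>G\<in>Gs. C \<inter> G \<noteq> {})}"

definition path_sets :: "nat \<Rightarrow> nat \<Rightarrow> nat set set" where
  "path_sets n t = {{i..i+t-1} | i. 1 \<le> i \<and> i \<le> n - t + 1}"

end

theory Submission
  imports Defs
begin



abbreviation lk where "lk \<equiv> Poly_Mapping.lookup"
abbreviation ks where "ks \<equiv> Poly_Mapping.keys"
abbreviation sg where "sg \<equiv> Poly_Mapping.single"

type_synonym mono = "nat \<Rightarrow>\<^sub>0 nat"

definition mon :: "mono \<Rightarrow> 'k::field mpoly" where "mon a = sg a 1"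

lemma keys_mon[simp]: "ks (mon a :: 'k::field mpoly) = {a}"
  by (simp add: mon_def)

lemma keys_mono_add: "ks ((a::mono) + b) = ks a \<union> ks b"
  by (auto simp: in_keys_iff lookup_add)

lemma polyring_iff: "p \<in> polyring n \<longleftrightarrow> (\<forall>m\<in>ks p. ks m \<subseteq> {1..n})"
  by (simp add: polyring_def)

lemma polyring_0[simp]: "0 \<in> polyring n" by (simp add: polyring_def)

lemma polyring_1[simp]: "(1::'k::field mpoly) \<in> polyring n" by (simp add: polyring_def)

lemma polyring_add[intro]: "p \<in> polyring n \<Longrightarrow> q \<in> polyring n \<Longrightarrow> p + q \<in> polyring n"
  using keys_add[of p q] by (auto simp: polyring_def)

lemma polyring_uminus[intro]: "p \<in> polyring n \<Longrightarrow> - p \<in> polyring n"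
  by (auto simp: polyring_def)

lemma polyring_diff[intro]: "p \<in> polyring n \<Longrightarrow> q \<in> polyring n \<Longrightarrow> p - q \<in> polyring n"
  using keys_diff[of p q] by (auto simp: polyring_def)

lemma polyring_mult[intro]: "p \<in> polyring n \<Longrightarrow> q \<in> polyring n \<Longrightarrow> p * q \<in> polyring n"
  using keys_mult[of p q] by (fastforce simp: polyring_def keys_mono_add)

lemma polyring_sum[intro]: "(\<And>x. x \<in> A \<Longrightarrow> f x \<in> polyring n) \<Longrightarrow> sum f A \<in> polyring n"
  by (induction A rule: infinite_finite_induct) auto

lemma polyring_prod[intro]: "(\<And>x. x \<in> A \<Longrightarrow> f x \<in> polyring n) \<Longrightarrow> prod f A \<in> polyring n"
  by (induction A rule: infinite_finite_induct) auto

lemma polyring_single[intro]: "ks a \<subseteq> {1..n} \<Longrightarrow> sg a c \<in> polyring n"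
  by (simp add: polyring_def)

lemma polyring_mon[intro]: "ks a \<subseteq> {1..n} \<Longrightarrow> mon a \<in> polyring n"
  by (simp add: polyring_def)

lemma poly_expand: "p = (\<Sum>b\<in>ks p. sg b (lk p b))"
proof (rule poly_mapping_eqI)
  fix k
  have "lk (\<Sum>b\<in>ks p. sg b (lk p b)) k = (\<Sum>b\<in>ks p. (lk p b when b = k))"
    by (simp add: lookup_sum lookup_single)
  also have "\<dots> = lk p k"
    by (cases "k \<in> ks p") (simp_all add: when_def in_keys_iff)
  finally show "lk p k = lk (\<Sum>b\<in>ks p. sg b (lk p b)) k" by simp
qed

section \<open>ideals\<close>

lemma ideal_sum:
  assumes "is_ideal n I" "\<And>x. x \<in> A \<Longrightarrow> f x \<in> I"
  shows "sum f A \<in> I"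
  using assms(2)
proof (induction A rule: infinite_finite_induct)
  case (infinite A) then show ?case using assms(1) by (simp add: is_ideal_def)
next
  case empty then show ?case using assms(1) by (simp add: is_ideal_def)
next
  case (insert x F) then show ?case using assms(1) by (simp add: is_ideal_def)
qed

lemma ideal_mult:
  assumes "is_ideal n I" "r \<in> polyring n" "a \<in> I" shows "r * a \<in> I"
  using assms by (auto simp: is_ideal_def)

lemma ideal_diff:
  assumes "is_ideal n I" "a \<in> I" "b \<in> I" shows "a - b \<in> I"
proof -
  have m: "(- 1) \<in> polyring n" by (intro polyring_uminus polyring_1)
  have "(-1) * b \<in> I" by (rule ideal_mult[OF assms(1) m assms(3)])
  then have "- b \<in> I" by simp
  then have "a + (- b) \<in> I" using assms by (auto simp: is_ideal_def)
  then show ?thesis by simp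
qed

lemma gen_ideal_sub:
  assumes "is_ideal n I" "A \<subseteq> I" shows "gen_ideal n A \<subseteq> I"
proof
  fix p assume "p \<in> gen_ideal n A"
  then obtain F c where F: "finite F" "F \<subseteq> A" "\<forall>a\<in>F. c a \<in> polyring n" "p = (\<Sum>a\<in>F. c a * a)"
    by (auto simp: gen_ideal_def)
  show "p \<in> I" unfolding F(4)
    by (rule ideal_sum[OF assms(1)]) (use F assms in \<open>auto intro: ideal_mult\<close>)
qed

lemma gen_ideal_mono: "A \<subseteq> B \<Longrightarrow> gen_ideal n A \<subseteq> gen_ideal n B"
  by (auto simp: gen_ideal_def)

lemma gen_ideal_base: "a \<in> A \<Longrightarrow> a \<in> gen_ideal n A"
  unfolding gen_ideal_def
  by (rule CollectI, rule exI[of _ "{a}"], rule exI[of _ "\<lambda>_. 1"]) auto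

lemma gen_ideal_is_ideal:
  fixes A :: "'k::field mpoly set"
  assumes "A \<subseteq> polyring n" shows "is_ideal n (gen_ideal n A)"
  unfolding is_ideal_def
proof (intro conjI ballI)
  show "gen_ideal n A \<subseteq> polyring n"
  proof
    fix p assume "p \<in> gen_ideal n A"
    then obtain F c where F: "finite F" "F \<subseteq> A" "\<forall>a\<in>F. c a \<in> polyring n" "p = (\<Sum>a\<in>F. c a * a)"
      by (auto simp: gen_ideal_def)
    show "p \<in> polyring n" unfolding F(4)
      by (rule polyring_sum) (use F assms in blast)
  qed
  show "0 \<in> gen_ideal n A"
    unfolding gen_ideal_def by (rule CollectI, rule exI[of _ "{}"]) auto
next
  fix a b :: "'k::field mpoly" assume "a \<in> gen_ideal n A" "b \<in> gen_ideal n A"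
  then obtain F1 c1 F2 c2 where F1: "finite F1" "F1 \<subseteq> A" "\<forall>x\<in>F1. c1 x \<in> polyring n" "a = (\<Sum>x\<in>F1. c1 x * x)"
    and F2: "finite F2" "F2 \<subseteq> A" "\<forall>x\<in>F2. c2 x \<in> polyring n" "b = (\<Sum>x\<in>F2. c2 x * x)"
    by (auto simp: gen_ideal_def)
  define c where "c x = (if x \<in> F1 then c1 x else 0) + (if x \<in> F2 then c2 x else 0)" for x
  have "(\<Sum>x\<in>F1\<union>F2. c x * x) = (\<Sum>x\<in>F1\<union>F2. (if x \<in> F1 then c1 x * x else 0)) + (\<Sum>x\<in>F1\<union>F2. (if x \<in> F2 then c2 x * x else 0))"
    unfolding sum.distrib[symmetric] by (rule sum.cong) (auto simp: c_def distrib_right)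
  also have "\<dots> = a + b"
  proof -
    have e1: "(F1 \<union> F2) \<inter> F1 = F1" "(F1 \<union> F2) \<inter> F2 = F2" by auto
    have "(\<Sum>x\<in>F1\<union>F2. (if x \<in> F1 then c1 x * x else 0)) = (\<Sum>x\<in>F1. c1 x * x)"
      using sum.inter_restrict[of "F1 \<union> F2" "\<lambda>x. c1 x * x" F1] F1(1) F2(1) e1 by simp
    moreover have "(\<Sum>x\<in>F1\<union>F2. (if x \<in> F2 then c2 x * x else 0)) = (\<Sum>x\<in>F2. c2 x * x)"
      using sum.inter_restrict[of "F1 \<union> F2" "\<lambda>x. c2 x * x" F2] F1(1) F2(1) e1 by simp
    ultimately show ?thesis using F1(4) F2(4) by simp
  qed
  finally have "a + b = (\<Sum>x\<in>F1\<union>F2. c x * x)" by simp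
  moreover have "\<forall>x\<in>F1\<union>F2. c x \<in> polyring n" using F1 F2 by (auto simp: c_def)
  ultimately show "a + b \<in> gen_ideal n A" using F1 F2 unfolding gen_ideal_def
    by (intro CollectI exI[of _ "F1 \<union> F2"] exI[of _ c]) auto
next
  fix r a :: "'k::field mpoly" assume r: "r \<in> polyring n" and "a \<in> gen_ideal n A"
  then obtain F c where F: "finite F" "F \<subseteq> A" "\<forall>x\<in>F. c x \<in> polyring n" "a = (\<Sum>x\<in>F. c x * x)"
    by (auto simp: gen_ideal_def)
  have "r * a = (\<Sum>x\<in>F. (r * c x) * x)" by (simp add: F(4) sum_distrib_left mult.assoc)
  moreover have "\<forall>x\<in>F. r * c x \<in> polyring n" using F r by auto
  ultimately show "r * a \<in> gen_ideal n A" using F unfolding gen_ideal_def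
    by (intro CollectI exI[of _ F] exI[of _ "\<lambda>x. r * c x"]) auto
qed

section \<open>monomial ideals\<close>

definition dv :: "mono \<Rightarrow> mono \<Rightarrow> bool" where "dv a b \<longleftrightarrow> (\<forall>i. lk a i \<le> lk b i)"

definition mideal :: "nat \<Rightarrow> mono set \<Rightarrow> 'k::field mpoly set" where
  "mideal n M = {p \<in> polyring n. \<forall>b\<in>ks p. \<exists>a\<in>M. dv a b}"

lemma mideal_is_ideal: "is_ideal n (mideal n M)"
  unfolding is_ideal_def mideal_def
proof (intro conjI ballI)
  fix a b :: "'k::field mpoly"
  assume a: "a \<in> {p \<in> polyring n. \<forall>b\<in>ks p. \<exists>a\<in>M. dv a b}" and b: "b \<in> {p \<in> polyring n. \<forall>b\<in>ks p. \<exists>a\<in>M. dv a b}"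
  then show "a + b \<in> {p \<in> polyring n. \<forall>b\<in>ks p. \<exists>a\<in>M. dv a b}"
    using keys_add[of a b] by blast
next
  fix r a :: "'k::field mpoly"
  assume r: "r \<in> polyring n" and a: "a \<in> {p \<in> polyring n. \<forall>b\<in>ks p. \<exists>a\<in>M. dv a b}"
  have "\<forall>b\<in>ks (r * a). \<exists>x\<in>M. dv x b"
  proof
    fix b assume "b \<in> ks (r * a)"
    then obtain u v where "u \<in> ks r" "v \<in> ks a" "b = u + v" using keys_mult[of r a] by blast
    then obtain x where "x \<in> M" "dv x v" using a by blast
    then show "\<exists>x\<in>M. dv x b" using \<open>b = u + v\<close> by (auto simp: dv_def lookup_add intro: trans_le_add2)
  qed
  then show "r * a \<in> {p \<in> polyring n. \<forall>b\<in>ks p. \<exists>a\<in>M. dv a b}" using r a by auto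
qed auto

lemma mideal_polyring: "mideal n M \<subseteq> polyring n" by (auto simp: mideal_def)

lemma mon_in_mideal: "ks a \<subseteq> {1..n} \<Longrightarrow> a \<in> M \<Longrightarrow> mon a \<in> mideal n M"
  by (auto simp: mideal_def dv_def polyring_def)

lemma gen_mon_eq:
  assumes "\<forall>a\<in>M. ks a \<subseteq> {1..n}"
  shows "gen_ideal n ((mon :: mono \<Rightarrow> 'k::field mpoly) ` M) = mideal n M"
proof
  show "gen_ideal n ((mon :: mono \<Rightarrow> 'k::field mpoly) ` M) \<subseteq> mideal n M"
    by (intro gen_ideal_sub mideal_is_ideal) (use assms mon_in_mideal in blast)
next
  have sub: "(mon :: mono \<Rightarrow> 'k::field mpoly) ` M \<subseteq> polyring n" using assms by (force simp: polyring_def)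
  show "mideal n M \<subseteq> gen_ideal n ((mon :: mono \<Rightarrow> 'k::field mpoly) ` M)"
  proof
    fix p :: "'k mpoly" assume p: "p \<in> mideal n M"
    have "(\<Sum>b\<in>ks p. sg b (lk p b)) \<in> gen_ideal n (mon ` M)"
    proof (rule ideal_sum[OF gen_ideal_is_ideal[OF sub]])
      fix b assume b: "b \<in> ks p"
      then obtain a where a: "a \<in> M" "dv a b" using p by (auto simp: mideal_def)
      have bn: "ks b \<subseteq> {1..n}" using p b by (auto simp: mideal_def polyring_def)
      have eq: "(b - a) + a = b"
        by (rule poly_mapping_eqI) (use a(2) in \<open>simp add: lookup_add lookup_minus dv_def\<close>)
      have "sg b (lk p b) = sg (b - a) (lk p b) * mon a"
        by (simp add: mon_def mult_single eq)
      moreover have "sg (b - a) (lk p b) \<in> polyring n"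
        using keys_diff[of b a] bn a assms by (intro polyring_single) auto
      moreover have "mon a \<in> gen_ideal n (mon ` M)" using a by (intro gen_ideal_base) auto
      ultimately show "sg b (lk p b) \<in> gen_ideal n (mon ` M)"
        using ideal_mult[OF gen_ideal_is_ideal[OF sub]] by metis
    qed
    then show "p \<in> gen_ideal n (mon ` M)" using poly_expand[of p] by simp
  qed
qed

definition msum :: "mono set \<Rightarrow> nat \<Rightarrow> mono set" where
  "msum M s = {\<Sum>i<s. a i | a. \<forall>i<s. a i \<in> M}"

lemma mideal_mult:
  assumes "p \<in> mideal n M1" "q \<in> mideal n M2"
  shows "p * q \<in> mideal n {a + b | a b. a \<in> M1 \<and> b \<in> M2}"
proof -
  have "p * q \<in> polyring n" using assms by (auto simp: mideal_def)
  moreover have "\<forall>c\<in>ks (p*q). \<exists>x\<in>{a + b | a b. a \<in> M1 \<and> b \<in> M2}. dv x c"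
  proof
    fix c assume "c \<in> ks (p*q)"
    then obtain u v where uv: "u \<in> ks p" "v \<in> ks q" "c = u + v" using keys_mult[of p q] by blast
    then obtain x y where "x \<in> M1" "dv x u" "y \<in> M2" "dv y v" using assms unfolding mideal_def by blast
    then have "x + y \<in> {a + b | a b. a \<in> M1 \<and> b \<in> M2}" by blast
    moreover have "dv (x + y) c" using uv \<open>dv x u\<close> \<open>dv y v\<close> by (auto simp: dv_def lookup_add intro: add_mono)
    ultimately show "\<exists>x\<in>{a + b | a b. a \<in> M1 \<and> b \<in> M2}. dv x c" by blast
  qed
  ultimately show ?thesis by (simp add: mideal_def)
qed

lemma mideal_mono: "M1 \<subseteq> M2 \<Longrightarrow> mideal n M1 \<subseteq> mideal n M2"
  unfolding mideal_def by blast

lemma prod_in_mideal: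
  "(\<forall>i<s. f i \<in> mideal n M) \<Longrightarrow> (\<Prod>i<s. f i) \<in> mideal n (msum M s)"
proof (induction s)
  case 0
  have "msum M 0 = {0}" by (simp add: msum_def)
  then show ?case by (simp add: mideal_def dv_def)
next
  case (Suc s)
  have "(\<Prod>i<Suc s. f i) \<in> mideal n {a + b | a b. a \<in> msum M s \<and> b \<in> M}"
    using Suc by (simp add: mideal_mult)
  moreover have "{a + b | a b. a \<in> msum M s \<and> b \<in> M} \<subseteq> msum M (Suc s)"
  proof
    fix x assume "x \<in> {a + b | a b. a \<in> msum M s \<and> b \<in> M}"
    then obtain al b where x: "x = (\<Sum>i<s. al i) + b" "\<forall>i<s. al i \<in> M" "b \<in> M"
      by (auto simp: msum_def)
    have "x = (\<Sum>i<Suc s. (al(s := b)) i)" using x by simp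
    moreover have "\<forall>i<Suc s. (al(s := b)) i \<in> M" using x by auto
    ultimately show "x \<in> msum M (Suc s)" unfolding msum_def by blast
  qed
  ultimately show ?case using mideal_mono by blast
qed

lemma prod_mon: "(\<Prod>i\<in>A. (mon (f i) :: 'k::field mpoly)) = mon (\<Sum>i\<in>A. f i)"
  by (induction A rule: infinite_finite_induct) (auto simp: mon_def mult_single)

lemma keys_mono_sum: "ks (\<Sum>i\<in>A. (f i :: mono)) \<subseteq> (\<Union>i\<in>A. ks (f i))"
  by (induction A rule: infinite_finite_induct) (auto simp: keys_mono_add)

lemma pow_eq:
  assumes "\<forall>a\<in>M. ks a \<subseteq> {1..n}"
  shows "ideal_pow n (mideal n M :: 'k::field mpoly set) s = mideal n (msum M s)"
proof
  show "ideal_pow n (mideal n M :: 'k::field mpoly set) s \<subseteq> mideal n (msum M s)"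
    unfolding ideal_pow_def
    by (rule gen_ideal_sub[OF mideal_is_ideal]) (auto intro: prod_in_mideal)
next
  have M2: "\<forall>a\<in>msum M s. ks a \<subseteq> {1..n}"
  proof
    fix a assume "a \<in> msum M s"
    then obtain al where al: "a = (\<Sum>i<s. al i)" "\<forall>i<s. al i \<in> M" by (auto simp: msum_def)
    have "ks a \<subseteq> (\<Union>i\<in>{..<s}. ks (al i))" unfolding al(1) by (rule keys_mono_sum)
    then show "ks a \<subseteq> {1..n}" using al(2) assms by blast
  qed
  have "(mon :: mono \<Rightarrow> 'k mpoly) ` msum M s \<subseteq> {\<Prod>i<s. f i | f. \<forall>i<s. f i \<in> (mideal n M :: 'k mpoly set)}"
  proof
    fix x assume "x \<in> (mon :: mono \<Rightarrow> 'k mpoly) ` msum M s"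
    then obtain al where al: "x = mon (\<Sum>i<s. al i)" "\<forall>i<s. al i \<in> M" by (auto simp: msum_def)
    have "x = (\<Prod>i<s. mon (al i))" by (simp add: al prod_mon)
    moreover have "\<forall>i<s. (mon (al i) :: 'k mpoly) \<in> mideal n M" using al assms mon_in_mideal by blast
    ultimately show "x \<in> {\<Prod>i<s. f i | f. \<forall>i<s. f i \<in> (mideal n M :: 'k mpoly set)}" by blast
  qed
  then show "mideal n (msum M s) \<subseteq> ideal_pow n (mideal n M :: 'k::field mpoly set) s"
    unfolding ideal_pow_def gen_mon_eq[OF M2, symmetric] by (rule gen_ideal_mono)
qed




definition deg :: "nat set \<Rightarrow> mono \<Rightarrow> nat" where "deg D b = (\<Sum>i\<in>D. lk b i)"

definition Fl :: "nat set \<Rightarrow> nat \<Rightarrow> 'k::field mpoly set" where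
  "Fl D k = {p. \<forall>b\<in>ks p. k \<le> deg D b}"

definition low :: "nat set \<Rightarrow> nat \<Rightarrow> 'k::field mpoly \<Rightarrow> 'k mpoly" where
  "low D k p = Abs_poly_mapping (\<lambda>b. lk p b when deg D b < k)"

lemma lookup_low: "lk (low D k p) b = (lk p b when deg D b < k)"
proof -
  have "finite {b. (lk p b when deg D b < k) \<noteq> 0}"
    by (rule finite_subset[of _ "ks p"]) (auto simp: in_keys_iff)
  then show ?thesis by (simp add: low_def)
qed

lemma keys_low: "ks (low D k p) = {b\<in>ks p. deg D b < k}"
  by (auto simp: in_keys_iff lookup_low)

lemma deg_add[simp]: "deg D (a + b) = deg D a + deg D b"
  by (simp add: deg_def lookup_add sum.distrib)

lemma Fl_0[simp]: "p \<in> Fl D 0" by (simp add: Fl_def)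

lemma Fl_zero[simp]: "0 \<in> Fl D k" by (simp add: Fl_def)

lemma Fl_add: "p \<in> Fl D k \<Longrightarrow> q \<in> Fl D k \<Longrightarrow> p + q \<in> Fl D k"
  using keys_add[of p q] by (auto simp: Fl_def)

lemma Fl_diff: "p \<in> Fl D k \<Longrightarrow> q \<in> Fl D k \<Longrightarrow> p - q \<in> Fl D k"
  using keys_diff[of p q] by (auto simp: Fl_def)

lemma Fl_mult: "p \<in> Fl D j \<Longrightarrow> q \<in> Fl D k \<Longrightarrow> p * q \<in> Fl D (j + k)"
  using keys_mult[of p q] by (fastforce simp: Fl_def intro: add_mono)

lemma Fl_mult0: "q \<in> Fl D k \<Longrightarrow> p * q \<in> Fl D k"
  using Fl_mult[of p D 0 q k] by simp

lemma Fl_mult0': "q \<in> Fl D k \<Longrightarrow> q * p \<in> Fl D k"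
  using Fl_mult0[of q D k p] by (simp add: mult.commute)

lemma high_Fl: "p - low D k p \<in> Fl D k"
  unfolding Fl_def by (auto simp: in_keys_iff lookup_minus lookup_low when_def split: if_splits)

lemma low_zero_iff: "low D k p = 0 \<longleftrightarrow> p \<in> Fl D k"
proof
  assume "low D k p = 0" then show "p \<in> Fl D k" using high_Fl[of p D k] by simp
next
  assume "p \<in> Fl D k" then have "ks (low D k p) = {}" by (auto simp: keys_low Fl_def)
  then show "low D k p = 0" by simp
qed

lemma low_poly: "p \<in> polyring n \<Longrightarrow> low D k p \<in> polyring n"
  by (auto simp: polyring_def keys_low)

lemma deg0_lemma:
  fixes a b :: "'k::field mpoly"
  assumes a0: "a \<noteq> 0" and ak: "\<forall>c\<in>ks a. deg D c = 0" and b: "b \<notin> Fl D k"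
  shows "a * b \<notin> Fl D k"
proof
  assume ab: "a * b \<in> Fl D k"
  define b0 where "b0 = low D k b"
  have b0: "b0 \<noteq> 0" using b by (simp add: b0_def low_zero_iff)
  have b1: "b - b0 \<in> Fl D k" unfolding b0_def by (rule high_Fl)
  have "a * b0 = a * b - a * (b - b0)" by (simp add: algebra_simps)
  also have "\<dots> \<in> Fl D k" using ab Fl_mult0[OF b1] by (intro Fl_diff)
  finally have inF: "a * b0 \<in> Fl D k" .
  have "a * b0 \<noteq> 0" using a0 b0 by simp
  then obtain c where c: "c \<in> ks (a * b0)" by (metis keys_eq_empty ex_in_conv)
  then obtain u v where uv: "u \<in> ks a" "v \<in> ks b0" "c = u + v" using keys_mult[of a b0] by blast
  have "deg D c < k" using uv ak by (auto simp: b0_def keys_low)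
  then show False using inF c by (auto simp: Fl_def)
qed

definition pid :: "nat \<Rightarrow> nat set \<Rightarrow> 'k::field mpoly set" where
  "pid n D = Fl D 1 \<inter> polyring n"

lemma deg_zero_mono[simp]: "deg D 0 = 0" by (simp add: deg_def)

lemma low1_keys: "\<forall>c\<in>ks (low D 1 p). deg D c = 0"
  by (auto simp: keys_low)

lemma pid_ideal: "is_ideal n (pid n D)"
  unfolding is_ideal_def pid_def
  using Fl_mult0 by (auto intro: Fl_add)

lemma one_notin_pid: "(1::'k::field mpoly) \<notin> pid n D"
  by (simp add: pid_def Fl_def)

lemma pid_prime: "is_prime_ideal n (pid n D :: 'k::field mpoly set)"
  unfolding is_prime_ideal_def
proof (intro conjI ballI impI)
  show "is_ideal n (pid n D :: 'k mpoly set)" by (rule pid_ideal)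
  show "pid n D \<noteq> (polyring n :: 'k mpoly set)" using one_notin_pid[where 'k='k] polyring_1 by blast
next
  fix a b :: "'k mpoly" assume a: "a \<in> polyring n" and b: "b \<in> polyring n" and ab: "a * b \<in> pid n D"
  show "a \<in> pid n D \<or> b \<in> pid n D"
  proof (rule ccontr)
    assume "\<not> (a \<in> pid n D \<or> b \<in> pid n D)"
    then have na: "a \<notin> Fl D 1" and nb: "b \<notin> Fl D 1" using a b by (auto simp: pid_def)
    define a0 where "a0 = low D 1 a"
    have a00: "a0 \<noteq> 0" using na by (simp add: a0_def low_zero_iff)
    have a1: "a - a0 \<in> Fl D 1" unfolding a0_def by (rule high_Fl)
    have "a0 * b = a * b - (a - a0) * b" by (simp add: algebra_simps)
    also have "\<dots> \<in> Fl D 1" using ab Fl_mult0'[OF a1] by (intro Fl_diff) (auto simp: pid_def)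
    finally show False using deg0_lemma[OF a00 low1_keys[of D a, folded a0_def] nb] by blast
  qed
qed

lemma ideal_one: "is_ideal n P \<Longrightarrow> 1 \<in> P \<Longrightarrow> P = polyring n"
  using ideal_mult[of n P _ 1] by (auto simp: is_ideal_def)

lemma prime_pow:
  assumes P: "is_prime_ideal n P" and a: "a \<in> polyring n" and as: "a ^ s \<in> P"
  shows "a \<in> P"
  using as
proof (induction s)
  case 0
  then show ?case using P ideal_one by (auto simp: is_prime_ideal_def)
next
  case (Suc s)
  have "a ^ s \<in> polyring n" using a by (induction s) auto
  then show ?case using Suc P a by (auto simp: is_prime_ideal_def)
qed

lemma prime_prod:
  assumes P: "is_prime_ideal n P" and X: "finite X" and g: "\<forall>x\<in>X. g x \<in> polyring n"
    and pr: "prod g X \<in> P"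
  shows "\<exists>x\<in>X. g x \<in> P"
  using X g pr
proof (induction X rule: finite_induct)
  case empty
  then show ?case using P ideal_one by (auto simp: is_prime_ideal_def)
next
  case (insert x F)
  have "prod g F \<in> polyring n" using insert by auto
  then show ?case using insert P by (auto simp: is_prime_ideal_def)
qed

lemma lk_single_mono: "lk (sg i (s::nat)) j = (if i = j then s else 0)"
  by (simp add: lookup_single when_def)

lemma var_pow: "(var i :: 'k::field mpoly) ^ s = mon (sg i s)"
  by (induction s) (auto simp: var_def mon_def mult_single single_add[symmetric] add.commute)

lemma deg_single: "finite D \<Longrightarrow> deg D (sg i s) = (if i \<in> D then s else 0)"
  by (simp add: deg_def lk_single_mono)

lemma dv_single: "dv (sg i 1) b \<longleftrightarrow> 1 \<le> lk b i"
  by (auto simp: dv_def lk_single_mono)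

lemma pid_mideal:
  assumes "finite D"
  shows "pid n D = (mideal n {sg i 1 | i. i \<in> D} :: 'k::field mpoly set)"
proof -
  have "\<And>b. (\<exists>a\<in>{sg i 1 | i. i \<in> D}. dv a b) \<longleftrightarrow> 1 \<le> deg D b"
  proof -
    fix b
    have "deg D b \<noteq> 0 \<longleftrightarrow> (\<exists>i\<in>D. lk b i \<noteq> 0)"
      using assms by (simp add: deg_def sum_eq_0_iff)
    then have "1 \<le> deg D b \<longleftrightarrow> (\<exists>i\<in>D. lk b i \<noteq> 0)" by linarith
    moreover have e1: "(\<exists>a\<in>{sg i 1 | i. i \<in> D}. dv a b) \<longleftrightarrow> (\<exists>i\<in>D. dv (sg i 1) b)" by blast
    moreover have e2: "dv (sg i 1) b \<longleftrightarrow> lk b i \<noteq> 0" for i unfolding dv_single by linarith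
    ultimately show "(\<exists>a\<in>{sg i 1 | i. i \<in> D}. dv a b) \<longleftrightarrow> 1 \<le> deg D b"
      by blast
  qed
  then show ?thesis by (auto simp: pid_def mideal_def Fl_def)
qed




lemma T_sub:
  fixes Ds :: "nat set set" and s n :: nat
  assumes fin: "finite Ds" and Dsub: "\<forall>D\<in>Ds. D \<subseteq> {1..n}" and s: "1 \<le> s"
    and J: "J = {p \<in> polyring n. \<forall>D\<in>Ds. p \<in> Fl D s}"
    and P: "P \<in> Ass n (J :: 'k::field mpoly set)"
  shows "P \<in> pid n ` Ds"
proof -
  obtain f where f: "f \<in> polyring n" and Pp: "is_prime_ideal n P" and Pf: "P = {g \<in> polyring n. g * f \<in> J}"
    using P by (auto simp: Ass_def)
  have Pid: "is_ideal n P" and PS: "P \<noteq> polyring n" using Pp by (auto simp: is_prime_ideal_def)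
  have "\<exists>D\<in>Ds. \<forall>g\<in>polyring n. g * f \<in> Fl D s \<longrightarrow> g \<in> P"
  proof (rule ccontr)
    assume "\<not> ?thesis"
    then have "\<forall>D\<in>Ds. \<exists>g. g \<in> polyring n \<and> g * f \<in> Fl D s \<and> g \<notin> P" by blast
    then have "\<exists>gD. \<forall>D\<in>Ds. gD D \<in> polyring n \<and> gD D * f \<in> Fl D s \<and> gD D \<notin> P"
      by (rule bchoice)
    then obtain gD where gD: "\<forall>D\<in>Ds. gD D \<in> polyring n \<and> gD D * f \<in> Fl D s \<and> gD D \<notin> P"
      by blast
    define G where "G = prod gD Ds"
    have GS: "G \<in> polyring n" unfolding G_def by (rule polyring_prod) (use gD in blast)
    have "\<forall>D\<in>Ds. G * f \<in> Fl D s"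
    proof
      fix D assume D: "D \<in> Ds"
      have "G = gD D * prod gD (Ds - {D})" using D fin by (simp add: G_def prod.remove)
      then have eqG: "G * f = (gD D * f) * prod gD (Ds - {D})" by (simp add: algebra_simps)
      have "gD D * f \<in> Fl D s" using gD D by blast
      then show "G * f \<in> Fl D s" unfolding eqG by (rule Fl_mult0')
    qed
    then have "G \<in> P" using GS f by (auto simp: Pf J)
    then have "\<exists>D\<in>Ds. gD D \<in> P" using prime_prod[OF Pp fin] gD by (auto simp: G_def)
    then show False using gD by blast
  qed
  then obtain D where D: "D \<in> Ds" and DP: "\<forall>g\<in>polyring n. g * f \<in> Fl D s \<longrightarrow> g \<in> P" by blast
  have finD: "finite D" using D Dsub finite_subset[of D "{1..n}"] by blast
  have DS: "D \<subseteq> {1..n}" using D Dsub by blast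
  have PD: "\<forall>g\<in>P. g * f \<in> Fl D s" using D by (auto simp: Pf J)
  have fnot: "f \<notin> Fl D s"
  proof
    assume "f \<in> Fl D s"
    then have "1 * f \<in> Fl D s" by simp
    then have "1 \<in> P" using DP polyring_1 by blast
    then show False using ideal_one[OF Pid] PS by blast
  qed
  have sub1: "pid n D \<subseteq> P"
  proof -
    have "pid n D = gen_ideal n ((mon :: mono \<Rightarrow> 'k mpoly) ` {sg i 1 | i. i \<in> D})"
      unfolding pid_mideal[OF finD]
      by (rule gen_mon_eq[symmetric]) (use DS in \<open>auto simp: subset_iff\<close>)
    also have "\<dots> \<subseteq> P"
    proof (rule gen_ideal_sub[OF Pid])
      show "(mon :: mono \<Rightarrow> 'k mpoly) ` {sg i 1 | i. i \<in> D} \<subseteq> P"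
      proof
        fix x assume "x \<in> (mon :: mono \<Rightarrow> 'k mpoly) ` {sg i 1 | i. i \<in> D}"
        then obtain i where i: "i \<in> D" "x = mon (sg i 1)" by auto
        have iS: "i \<in> {1..n}" using i DS by blast
        have vx: "x = var i" by (simp add: i var_def mon_def)
        have vS: "var i \<in> polyring n" using iS by (simp add: var_def polyring_def)
        have "(var i :: 'k mpoly) ^ s \<in> Fl D s"
          using i finD by (simp add: var_pow Fl_def deg_single)
        then have "(var i) ^ s * f \<in> Fl D s" by (rule Fl_mult0')
        moreover have "(var i :: 'k mpoly) ^ s \<in> polyring n" using vS by (induction s) auto
        ultimately have "(var i :: 'k mpoly) ^ s \<in> P" using DP by blast
        then show "x \<in> P" using prime_pow[OF Pp vS] vx by blast
      qed
    qed
    finally show ?thesis .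
  qed
  have sub2: "P \<subseteq> pid n D"
  proof
    fix g assume g: "g \<in> P"
    have gS: "g \<in> polyring n" using g Pf by auto
    show "g \<in> pid n D"
    proof (rule ccontr)
      assume "g \<notin> pid n D"
      then have ng: "g \<notin> Fl D 1" using gS by (auto simp: pid_def)
      define g0 where "g0 = low D 1 g"
      have g00: "g0 \<noteq> 0" using ng by (simp add: g0_def low_zero_iff)
      have g1: "g - g0 \<in> pid n D" using high_Fl[of g D 1] gS low_poly[OF gS]
        by (auto simp: pid_def g0_def)
      then have "g - (g - g0) \<in> P" using sub1 ideal_diff[OF Pid g] by blast
      then have "g0 \<in> P" by simp
      then have "g0 * f \<in> Fl D s" using PD by blast
      then show False using deg0_lemma[OF g00 low1_keys[of D g, folded g0_def] fnot] by blast
    qed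
  qed
  from sub1 sub2 D show ?thesis by blast
qed

lemma T_sup:
  fixes Ds :: "nat set set" and s n :: nat
  assumes fin: "finite Ds" and Dsub: "\<forall>D\<in>Ds. D \<subseteq> {1..n} \<and> D \<noteq> {}" and s: "1 \<le> s"
    and anti: "\<forall>D\<in>Ds. \<forall>D'\<in>Ds. D' \<subseteq> D \<longrightarrow> D' = D"
    and J: "J = {p \<in> polyring n. \<forall>D\<in>Ds. p \<in> Fl D s}"
    and D: "D \<in> Ds"
  shows "pid n D \<in> Ass n (J :: 'k::field mpoly set)"
proof -
  obtain i where i: "i \<in> D" using D Dsub by blast
  have DS: "D \<subseteq> {1..n}" using D Dsub by blast
  define \<phi> where "\<phi> = sg i (s - 1) + (\<Sum>j\<in>{1..n} - D. sg j s)"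
  have lkphi: "lk \<phi> j = (if j = i then s - 1 else 0) + (if j \<in> {1..n} - D then s else 0)" for j
    by (simp add: \<phi>_def lookup_add lookup_sum lk_single_mono)
  have phiS: "ks \<phi> \<subseteq> {1..n}"
    using i DS by (auto simp: in_keys_iff lkphi split: if_splits)
  define f where "f = (mon \<phi> :: 'k mpoly)"
  have fS: "f \<in> polyring n" using phiS by (simp add: f_def polyring_def)
  have finD: "finite D" using DS finite_subset[of D "{1..n}"] by blast
  have degD: "deg D \<phi> = s - 1"
  proof -
    have "deg D \<phi> = (\<Sum>j\<in>D. if j = i then s - 1 else 0)"
      unfolding deg_def by (rule sum.cong) (auto simp: lkphi)
    also have "\<dots> = s - 1" using i finD by simp
    finally show ?thesis .
  qed
  have degD': "s \<le> deg D' \<phi>" if D': "D' \<in> Ds" "D' \<noteq> D" for D'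
  proof -
    have "\<not> D' \<subseteq> D" using bspec[OF bspec[OF anti D] D'(1)] D'(2) by blast
    then obtain j where j: "j \<in> D'" "j \<notin> D" by blast
    have jn: "j \<in> {1..n}" using j D' Dsub by blast
    have finD': "finite D'" using D' Dsub finite_subset[of D' "{1..n}"] by blast
    have "s \<le> lk \<phi> j" using j jn by (simp add: lkphi)
    also have "\<dots> \<le> deg D' \<phi>" unfolding deg_def by (rule member_le_sum) (use j finD' in auto)
    finally show ?thesis .
  qed
  have fD: "f \<in> Fl D (s - 1)" using degD by (simp add: f_def Fl_def)
  have fnot: "f \<notin> Fl D s" using degD s by (simp add: f_def Fl_def)
  have fD': "f \<in> Fl D' s" if "D' \<in> Ds" "D' \<noteq> D" for D'
    using degD'[OF that] by (simp add: f_def Fl_def)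
  have "pid n D = {g \<in> polyring n. g * f \<in> J}"
  proof (intro equalityI subsetI)
    fix g :: "'k mpoly" assume g: "g \<in> pid n D"
    then have gS: "g \<in> polyring n" and g1: "g \<in> Fl D 1" by (auto simp: pid_def)
    have "\<forall>D'\<in>Ds. g * f \<in> Fl D' s"
    proof
      fix D' assume D': "D' \<in> Ds"
      show "g * f \<in> Fl D' s"
      proof (cases "D' = D")
        case True
        then show ?thesis using Fl_mult[OF g1 fD] s by simp
      next
        case False
        then show ?thesis using Fl_mult0[OF fD'[OF D' False]] by blast
      qed
    qed
    then show "g \<in> {g \<in> polyring n. g * f \<in> J}" using gS fS by (auto simp: J)
  next
    fix g :: "'k mpoly" assume "g \<in> {g \<in> polyring n. g * f \<in> J}"
    then have gS: "g \<in> polyring n" and gf: "g * f \<in> Fl D s" using D by (auto simp: J)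
    show "g \<in> pid n D"
    proof (rule ccontr)
      assume "g \<notin> pid n D"
      then have ng: "g \<notin> Fl D 1" using gS by (auto simp: pid_def)
      define g0 where "g0 = low D 1 g"
      have g00: "g0 \<noteq> 0" using ng by (simp add: g0_def low_zero_iff)
      have g1: "g - g0 \<in> Fl D 1" unfolding g0_def by (rule high_Fl)
      have "(g - g0) * f \<in> Fl D s" using Fl_mult[OF g1 fD] s by simp
      then have "g * f - (g - g0) * f \<in> Fl D s" using gf by (intro Fl_diff)
      then have "g0 * f \<in> Fl D s" by (simp add: algebra_simps)
      then show False using deg0_lemma[OF g00 low1_keys[of D g, folded g0_def] fnot] by blast
    qed
  qed
  then show ?thesis using fS pid_prime unfolding Ass_def by blast
qed

theorem T:
  fixes Ds :: "nat set set" and s n :: nat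
  assumes fin: "finite Ds" and Dsub: "\<forall>D\<in>Ds. D \<subseteq> {1..n} \<and> D \<noteq> {}" and s: "1 \<le> s"
    and anti: "\<forall>D\<in>Ds. \<forall>D'\<in>Ds. D' \<subseteq> D \<longrightarrow> D' = D"
  shows "Ass n ({p \<in> polyring n. \<forall>D\<in>Ds. p \<in> Fl D s} :: 'k::field mpoly set) = pid n ` Ds"
proof
  show "Ass n ({p \<in> polyring n. \<forall>D\<in>Ds. p \<in> Fl D s} :: 'k::field mpoly set) \<subseteq> pid n ` Ds"
    using T_sub[OF fin _ s refl] Dsub by blast
  show "pid n ` Ds \<subseteq> Ass n ({p \<in> polyring n. \<forall>D\<in>Ds. p \<in> Fl D s} :: 'k::field mpoly set)"
    using T_sup[OF fin Dsub s anti refl] by blast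
qed




lemma deg_sum: "deg D (\<Sum>i\<in>A. f i) = (\<Sum>i\<in>A. deg D (f i))"
  by (induction A rule: infinite_finite_induct) auto

lemma deg_dv: "finite D \<Longrightarrow> dv a b \<Longrightarrow> deg D a \<le> deg D b"
  unfolding deg_def dv_def by (rule sum_mono) auto

lemma char_fwd:
  assumes Dfin: "\<forall>D\<in>Ds. finite D" and Mdeg: "\<forall>a\<in>M. \<forall>D\<in>Ds. 1 \<le> deg D a"
    and g: "g \<in> msum M s" and d: "dv g b" and D: "D \<in> Ds"
  shows "s \<le> deg D b"
proof -
  obtain al where al: "g = (\<Sum>i<s. al i)" "\<forall>i<s. al i \<in> M" using g by (auto simp: msum_def)
  have "s = (\<Sum>i<s. (1::nat))" by simp
  also have "\<dots> \<le> (\<Sum>i<s. deg D (al i))" by (rule sum_mono) (use al Mdeg D in auto)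
  also have "\<dots> = deg D g" by (simp add: al deg_sum)
  also have "\<dots> \<le> deg D b" using deg_dv Dfin D d by blast
  finally show ?thesis .
qed

lemma ntf_generic:
  assumes Mn: "\<forall>a\<in>M. ks a \<subseteq> {1..n}" and fin: "finite Ds"
    and Dsub: "\<forall>D\<in>Ds. D \<subseteq> {1..n} \<and> D \<noteq> {}"
    and anti: "\<forall>D\<in>Ds. \<forall>D'\<in>Ds. D' \<subseteq> D \<longrightarrow> D' = D"
    and char: "\<And>s b. 1 \<le> s \<Longrightarrow> ks b \<subseteq> {1..n} \<Longrightarrow> ((\<exists>g\<in>msum M s. dv g b) \<longleftrightarrow> (\<forall>D\<in>Ds. s \<le> deg D b))"
  shows "normally_torsion_free n (mideal n M :: 'k::field mpoly set)"
proof -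
  have eqJ: "mideal n (msum M s) = ({p \<in> polyring n. \<forall>D\<in>Ds. p \<in> Fl D s} :: 'k mpoly set)"
    if s: "1 \<le> s" for s
  proof -
    have "\<And>p::'k mpoly. p \<in> polyring n \<Longrightarrow> (\<forall>b\<in>ks p. \<exists>g\<in>msum M s. dv g b) \<longleftrightarrow> (\<forall>D\<in>Ds. p \<in> Fl D s)"
      using char[OF s] by (auto simp: Fl_def polyring_def)
    then show ?thesis by (auto simp: mideal_def)
  qed
  have m1: "msum M 1 = M"
  proof
    show "msum M 1 \<subseteq> M" by (auto simp: msum_def)
    show "M \<subseteq> msum M 1"
    proof
      fix x assume "x \<in> M"
      have e: "(\<Sum>(i::nat)<1. (\<lambda>_. x) i) = x" by (simp add: card_lessThan)
      then have "x = (\<Sum>(i::nat)<1. (\<lambda>_. x) i) \<and> (\<forall>(i::nat)<1. (\<lambda>_. x) i \<in> M)" using \<open>x \<in> M\<close> by simp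
      then show "x \<in> msum M 1" unfolding msum_def by blast
    qed
  qed
  have A1: "Ass n (mideal n M :: 'k mpoly set) = pid n ` Ds"
    using eqJ[of 1] m1 T[OF fin Dsub _ anti, of 1] by simp
  show ?thesis unfolding normally_torsion_free_def
  proof (intro allI impI)
    fix s :: nat assume s: "1 \<le> s"
    show "Ass n (ideal_pow n (mideal n M :: 'k mpoly set) s) = Ass n (mideal n M)"
      unfolding pow_eq[OF Mn] eqJ[OF s] A1 using T[OF fin Dsub s anti] by simp
  qed
qed




definition W :: "nat \<Rightarrow> nat \<Rightarrow> nat set" where "W t i = {i..i+t-1}"

definition cov :: "nat \<Rightarrow> nat \<Rightarrow> nat set \<Rightarrow> bool" where
  "cov n t D \<longleftrightarrow> D \<subseteq> {1..n} \<and> (\<forall>i. 1 \<le> i \<and> i \<le> n - t + 1 \<longrightarrow> D \<inter> W t i \<noteq> {})"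

lemma C1:
  fixes a :: "nat \<Rightarrow> nat"
  assumes t: "1 \<le> t" "t \<le> n"
    and H: "\<forall>D. cov n t D \<longrightarrow> s \<le> (\<Sum>j\<in>D. a j)"
  shows "\<exists>f. (\<forall>k<s. 1 \<le> f k \<and> f k \<le> n - t + 1) \<and> (\<forall>j. (\<Sum>k<s. if j \<in> W t (f k) then 1 else 0) \<le> a j)"
  using H
proof (induction s arbitrary: a)
  case 0
  then show ?case by simp
next
  case (Suc s)
  define Z where "Z = {j\<in>{1..n}. a j = 0}"
  have "(\<Sum>j\<in>Z. a j) = 0" by (simp add: Z_def)
  then have "\<not> cov n t Z" using Suc.prems by fastforce
  then have ex: "\<exists>i. 1 \<le> i \<and> i \<le> n - t + 1 \<and> Z \<inter> W t i = {}" by (auto simp: cov_def Z_def)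
  define p0 where "p0 = (LEAST i. 1 \<le> i \<and> i \<le> n - t + 1 \<and> Z \<inter> W t i = {})"
  have p0: "1 \<le> p0" "p0 \<le> n - t + 1" "Z \<inter> W t p0 = {}"
    using LeastI_ex[OF ex] unfolding p0_def by blast+
  have p0min: "Z \<inter> W t q \<noteq> {}" if "1 \<le> q" "q < p0" for q
    using not_less_Least[of q "\<lambda>i. 1 \<le> i \<and> i \<le> n - t + 1 \<and> Z \<inter> W t i = {}"] that p0
    unfolding p0_def[symmetric] by auto
  define J where "J = W t p0"
  have Jn: "J \<subseteq> {1..n}" using p0 t by (auto simp: J_def W_def)
  have pos: "1 \<le> a j" if "j \<in> J" for j
  proof -
    have "j \<in> {1..n}" using that Jn by blast
    moreover have "j \<notin> Z" using that p0(3) J_def by blast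
    ultimately show ?thesis by (auto simp: Z_def)
  qed
  define a' where "a' j = a j - (if j \<in> J then 1 else 0)" for j
  have a'out: "a' j = a j" if "j \<notin> J" for j using that by (simp add: a'_def)
  have H': "\<forall>D. cov n t D \<longrightarrow> s \<le> (\<Sum>j\<in>D. a' j)"
  proof (intro allI impI)
    fix D assume D: "cov n t D"
    have finD: "finite D" using D finite_subset[of D "{1..n}"] by (auto simp: cov_def)
    have DJ: "D \<inter> J \<noteq> {}" using D p0 by (auto simp: cov_def J_def)
    define m where "m = Max (D \<inter> J)"
    have m: "m \<in> D \<inter> J" unfolding m_def by (rule Max_in) (use DJ finD in auto)
    have mmax: "d \<le> m" if "d \<in> D \<inter> J" for d unfolding m_def by (rule Max_ge) (use that finD in auto)
    define D' where "D' = (D - J) \<union> {m} \<union> Z"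
    have covD': "cov n t D'"
      unfolding cov_def
    proof (intro conjI allI impI)
      show "D' \<subseteq> {1..n}" using D m by (auto simp: D'_def Z_def cov_def)
    next
      fix q assume q: "1 \<le> q \<and> q \<le> n - t + 1"
      show "D' \<inter> W t q \<noteq> {}"
      proof (cases "q < p0")
        case True
        then show ?thesis using p0min q by (auto simp: D'_def)
      next
        case False
        obtain d where d: "d \<in> D" "d \<in> W t q" using D q by (auto simp: cov_def)
        show ?thesis
        proof (cases "d \<in> J")
          case False
          then show ?thesis using d by (auto simp: D'_def)
        next
          case True
          have "d \<le> m" using mmax d True by blast
          moreover have "m \<le> p0 + t - 1" using m by (auto simp: J_def W_def)
          ultimately have "m \<in> W t q" using d \<open>\<not> q < p0\<close> by (auto simp: W_def)
          then show ?thesis by (auto simp: D'_def)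
        qed
      qed
    qed
    have finD': "finite D'" using covD' finite_subset[of D' "{1..n}"] by (auto simp: cov_def)
    have "Suc s \<le> (\<Sum>j\<in>D'. a j)" using Suc.prems covD' by blast
    also have "\<dots> = (\<Sum>j\<in>D' - Z. a j) + (\<Sum>j\<in>D' \<inter> Z. a j)"
      using finD' by (metis add.commute sum.Int_Diff)
    also have "(\<Sum>j\<in>D' \<inter> Z. a j) = 0" by (simp add: Z_def)
    also have "(\<Sum>j\<in>D' - Z. a j) \<le> (\<Sum>j\<in>insert m (D - J). a j)"
      by (rule sum_mono2) (use finD in \<open>auto simp: D'_def\<close>)
    also have "\<dots> = a m + (\<Sum>j\<in>D - J. a j)" using finD m by simp
    also have "(\<Sum>j\<in>D - J. a j) = (\<Sum>j\<in>D - J. a' j)" by (rule sum.cong) (auto simp: a'out)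
    also have "a m = a' m + 1" using pos[of m] m by (simp add: a'_def)
    also have "a' m + 1 + (\<Sum>j\<in>D - J. a' j) = (\<Sum>j\<in>insert m (D - J). a' j) + 1"
      using finD m by simp
    also have "(\<Sum>j\<in>insert m (D - J). a' j) \<le> (\<Sum>j\<in>D. a' j)"
      by (rule sum_mono2) (use finD m in auto)
    finally show "s \<le> (\<Sum>j\<in>D. a' j)" by simp
  qed
  obtain f where f: "\<forall>k<s. 1 \<le> f k \<and> f k \<le> n - t + 1"
    "\<forall>j. (\<Sum>k<s. if j \<in> W t (f k) then 1 else 0) \<le> a' j"
    using Suc.IH[OF H'] by blast
  define g where "g = f(s := p0)"
  have "\<forall>k<Suc s. 1 \<le> g k \<and> g k \<le> n - t + 1" using f p0 by (auto simp: g_def less_Suc_eq)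
  moreover have "\<forall>j. (\<Sum>k<Suc s. if j \<in> W t (g k) then 1 else 0) \<le> a j"
  proof
    fix j
    have "(\<Sum>k<Suc s. if j \<in> W t (g k) then 1 else 0) = (\<Sum>k<s. if j \<in> W t (f k) then 1 else 0) + (if j \<in> J then 1 else 0)"
      by (simp add: g_def J_def)
    also have "\<dots> \<le> a' j + (if j \<in> J then 1 else 0)" using f(2) by simp
    also have "\<dots> = a j" using pos[of j] by (auto simp: a'_def)
    finally show "(\<Sum>k<Suc s. if j \<in> W t (g k) then 1 else 0) \<le> a j" .
  qed
  ultimately show ?case by blast
qed




lemma mod_pick:
  fixes L s r :: nat
  assumes "r < s"
  shows "\<exists>u. L < u \<and> u \<le> L + s \<and> u mod s = r"
proof -
  define u where "u = r + s * ((L + s - r) div s)"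
  have s0: "0 < s" using assms by simp
  have a: "(L + s - r) div s * s \<le> L + s - r" by (simp add: div_times_less_eq_dividend)
  have b: "L + s - r < (L + s - r) div s * s + s"
    using s0 by (metis add.commute div_mult_mod_eq mod_less_divisor add_less_cancel_left)
  have a': "s * ((L + s - r) div s) \<le> L + s - r" using a by (simp add: mult.commute)
  have b': "L + s - r < s * ((L + s - r) div s) + s" using b by (simp add: mult.commute)
  have "L < u" using b' assms unfolding u_def by linarith
  moreover have "u \<le> L + s" using a' assms unfolding u_def by linarith
  moreover have "u mod s = r" using assms unfolding u_def by simp
  ultimately show ?thesis by blast
qed

lemma C2:
  fixes a :: "nat \<Rightarrow> nat"
  assumes t: "1 \<le> t" "t \<le> n" and s: "1 \<le> s"
    and H: "\<forall>i. 1 \<le> i \<and> i \<le> n - t + 1 \<longrightarrow> s \<le> (\<Sum>j\<in>W t i. a j)"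
  shows "\<exists>C. (\<forall>r<s. cov n t (C r)) \<and> (\<forall>j. (\<Sum>r<s. if j \<in> C r then 1 else 0) \<le> a j)"
proof -
  define A where "A j = (\<Sum>i\<in>{1..j}. a i)" for j
  have Asuc: "A (Suc j) = A j + a (Suc j)" for j by (simp add: A_def)
  have Amono: "A j \<le> A k" if "j \<le> k" for j k
    unfolding A_def by (rule sum_mono2) (use that in auto)
  have Awin: "A (i - 1) + (\<Sum>j\<in>W t i. a j) = A (i + t - 1)" if "1 \<le> i" for i
  proof -
    have e: "{1..i+t-1} = {1..i-1} \<union> W t i" using that t by (auto simp: W_def)
    have d: "{1..i-1} \<inter> W t i = {}" using that by (auto simp: W_def)
    have "(\<Sum>j\<in>{1..i-1} \<union> W t i. a j) = (\<Sum>j\<in>{1..i-1}. a j) + (\<Sum>j\<in>W t i. a j)"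
      by (rule sum.union_disjoint) (use d in \<open>auto simp: W_def\<close>)
    then show ?thesis unfolding A_def e by simp
  qed
  define C where "C r = {j\<in>{1..n}. \<exists>u. A (j - 1) < u \<and> u \<le> A j \<and> u mod s = r}" for r
  have cov: "cov n t (C r)" if r: "r < s" for r
    unfolding cov_def
  proof (intro conjI allI impI)
    show "C r \<subseteq> {1..n}" by (auto simp: C_def)
  next
    fix i assume i: "1 \<le> i \<and> i \<le> n - t + 1"
    obtain u where u: "A (i - 1) < u" "u \<le> A (i - 1) + s" "u mod s = r" using mod_pick[OF r] by blast
    have uA: "u \<le> A (i + t - 1)" using u(2) H i Awin[of i] by fastforce
    define j where "j = (LEAST j. u \<le> A j)"
    have j1: "u \<le> A j" using LeastI[of "\<lambda>j. u \<le> A j", OF uA] by (simp add: j_def)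
    have j2: "j \<le> i + t - 1" using Least_le[of "\<lambda>j. u \<le> A j", OF uA] by (simp add: j_def)
    have j3: "i \<le> j"
    proof (rule ccontr)
      assume "\<not> i \<le> j"
      then have "A j \<le> A (i - 1)" by (intro Amono) simp
      then show False using j1 u(1) by simp
    qed
    have j4: "\<not> u \<le> A (j - 1)"
      using not_less_Least[of "j - 1" "\<lambda>j. u \<le> A j"] j3 i unfolding j_def[symmetric] by simp
    have "A (j - 1) < u" using j4 by simp
    then have "j \<in> C r" using j1 j2 j3 i t u(3) unfolding C_def by auto
    moreover have "j \<in> W t i" using j2 j3 by (simp add: W_def)
    ultimately show "C r \<inter> W t i \<noteq> {}" by blast
  qed
  have cnt: "(\<Sum>r<s. if j \<in> C r then 1 else 0) \<le> a j" for j
  proof -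
    have "(\<Sum>r<s. if j \<in> C r then 1 else (0::nat)) = card ({..<s} \<inter> {r. j \<in> C r})"
      by (simp add: sum.If_cases)
    also have "\<dots> \<le> a j"
    proof (cases "j \<in> {1..n}")
      case False
      then have "({..<s} \<inter> {r. j \<in> C r}) = {}" by (auto simp: C_def)
      then show ?thesis by simp
    next
      case True
      have "({..<s} \<inter> {r. j \<in> C r}) \<subseteq> (\<lambda>u. u mod s) ` {A (j - 1)<..A j}"
        by (auto simp: C_def)
      then have "card ({..<s} \<inter> {r. j \<in> C r}) \<le> card ((\<lambda>u. u mod s) ` {A (j - 1)<..A j})"
        by (intro card_mono) auto
      also have "\<dots> \<le> card {A (j - 1)<..A j}" by (rule card_image_le) simp
      also have "\<dots> = a j" using True Asuc[of "j - 1"] by simp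
      finally show ?thesis .
    qed
    finally show ?thesis .
  qed
  show ?thesis using cov cnt by blast
qed




definition indm :: "nat set \<Rightarrow> mono" where "indm G = (\<Sum>i\<in>G. sg i 1)"

lemma lk_indm: "finite G \<Longrightarrow> lk (indm G) j = (if j \<in> G then 1 else 0)"
  by (simp add: indm_def lookup_sum lk_single_mono)

lemma ks_indm: "ks (indm G) \<subseteq> G"
  using keys_mono_sum[of "\<lambda>i. sg i (1::nat)" G] by (auto simp: indm_def)

lemma xmon_eq: "(xmon G :: 'k::field mpoly) = mon (indm G)"
proof -
  have "(xmon G :: 'k mpoly) = (\<Prod>i\<in>G. mon (sg i 1))"
    by (simp add: xmon_def var_def mon_def)
  also have "\<dots> = mon (indm G)" by (simp add: prod_mon indm_def)
  finally show ?thesis .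
qed

lemma deg_indm: "finite D \<Longrightarrow> finite G \<Longrightarrow> D \<inter> G \<noteq> {} \<Longrightarrow> 1 \<le> deg D (indm G)"
proof -
  assume fD: "finite D" and fG: "finite G" and ne: "D \<inter> G \<noteq> {}"
  then obtain j where j: "j \<in> D" "j \<in> G" by blast
  have "1 = lk (indm G) j" using j fG by (simp add: lk_indm)
  also have "\<dots> \<le> deg D (indm G)" unfolding deg_def by (rule member_le_sum) (use j fD in auto)
  finally show ?thesis .
qed

lemma dv_sum_indm:
  assumes "\<forall>k<s. finite (G k)" "\<forall>j. (\<Sum>k<s. if j \<in> G k then 1 else 0) \<le> lk b j"
  shows "dv (\<Sum>k<s. indm (G k)) b"
  unfolding dv_def
proof
  fix j
  have "lk (\<Sum>k<s. indm (G k)) j = (\<Sum>k<s. if j \<in> G k then 1 else 0)"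
    unfolding lookup_sum by (rule sum.cong) (use assms(1) in \<open>auto simp: lk_indm\<close>)
  then show "lk (\<Sum>k<s. indm (G k)) j \<le> lk b j" using assms(2) by simp
qed

definition Dmin :: "nat \<Rightarrow> nat \<Rightarrow> nat set set" where
  "Dmin n t = {D. cov n t D \<and> (\<forall>D'. D' \<subset> D \<longrightarrow> \<not> cov n t D')}"

lemma min_sub_aux: "finite D \<Longrightarrow> cov n t D \<longrightarrow> (\<exists>D'\<in>Dmin n t. D' \<subseteq> D)"
proof (induction D rule: finite_psubset_induct)
  case (psubset A)
  show ?case
  proof
    assume cA: "cov n t A"
    show "\<exists>D'\<in>Dmin n t. D' \<subseteq> A"
    proof (cases "A \<in> Dmin n t")
      case True then show ?thesis by blast
    next
      case False
      then have "\<exists>D'. D' \<subset> A \<and> cov n t D'" using cA by (simp add: Dmin_def)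
      then obtain D' where D': "D' \<subset> A" "cov n t D'" by blast
      then obtain D'' where D'': "D'' \<in> Dmin n t" "D'' \<subseteq> D'" using psubset.IH[OF D'(1)] by blast
      have "D'' \<subseteq> A" using D''(2) D'(1) by (meson order_trans psubset_imp_subset)
      then show ?thesis using D''(1) by blast
    qed
  qed
qed

lemma min_sub: "cov n t D \<Longrightarrow> \<exists>D'\<in>Dmin n t. D' \<subseteq> D"
proof -
  assume c: "cov n t D"
  then have "D \<subseteq> {1..n}" unfolding cov_def by blast
  then have "finite D" using finite_subset[of D "{1..n}"] by blast
  then show ?thesis using min_sub_aux[of D n t] c by blast
qed

lemma W_sub: "1 \<le> i \<Longrightarrow> i \<le> n - t + 1 \<Longrightarrow> t \<le> n \<Longrightarrow> W t i \<subseteq> {1..n}"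
  by (auto simp: W_def)

lemma path_case:
  assumes t: "1 \<le> t" "t \<le> n"
  shows "normally_torsion_free n (path_ideal n t :: 'k::field mpoly set)"
proof -
  define M where "M = {indm (W t i) | i. 1 \<le> i \<and> i \<le> n - t + 1}"
  have Mn: "\<forall>a\<in>M. ks a \<subseteq> {1..n}"
  proof
    fix a assume "a \<in> M"
    then obtain i where i: "a = indm (W t i)" "1 \<le> i" "i \<le> n - t + 1" unfolding M_def by blast
    have "ks (indm (W t i)) \<subseteq> W t i" by (rule ks_indm)
    moreover have "W t i \<subseteq> {1..n}" using W_sub[OF i(2,3) t(2)] .
    ultimately show "ks a \<subseteq> {1..n}" unfolding i(1) by (rule order_trans)
  qed
  have "path_ideal n t = gen_ideal n ((mon :: mono \<Rightarrow> 'k mpoly) ` M)"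
    unfolding path_ideal_def M_def
  proof (rule arg_cong[where f="gen_ideal n"])
    show "{xmon {i..i + t - 1} |i. 1 \<le> i \<and> i \<le> n - t + 1} = (mon :: mono \<Rightarrow> 'k mpoly) ` {indm (W t i) |i. 1 \<le> i \<and> i \<le> n - t + 1}"
      unfolding xmon_eq W_def by blast
  qed
  also have "\<dots> = mideal n M" by (rule gen_mon_eq[OF Mn])
  finally have eq: "path_ideal n t = (mideal n M :: 'k mpoly set)" .
  have Dfin: "\<forall>D\<in>Dmin n t. finite D"
    using finite_subset[of _ "{1..n}"] by (auto simp: Dmin_def cov_def)
  have fin: "finite (Dmin n t)"
    by (rule finite_subset[of _ "Pow {1..n}"]) (auto simp: Dmin_def cov_def)
  have Dsub: "\<forall>D\<in>Dmin n t. D \<subseteq> {1..n} \<and> D \<noteq> {}"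
  proof
    fix D assume "D \<in> Dmin n t"
    then have "cov n t D" by (simp add: Dmin_def)
    then have "D \<subseteq> {1..n}" "D \<inter> W t 1 \<noteq> {}" using t by (auto simp: cov_def)
    then show "D \<subseteq> {1..n} \<and> D \<noteq> {}" by auto
  qed
  have anti: "\<forall>D\<in>Dmin n t. \<forall>D'\<in>Dmin n t. D' \<subseteq> D \<longrightarrow> D' = D"
  proof (intro ballI impI)
    fix D D' assume D: "D \<in> Dmin n t" and D': "D' \<in> Dmin n t" and sub: "D' \<subseteq> D"
    show "D' = D"
    proof (rule ccontr)
      assume "D' \<noteq> D"
      then have "D' \<subset> D" using sub by blast
      then show False using D D' unfolding Dmin_def by blast
    qed
  qed
  have Mdeg: "\<forall>a\<in>M. \<forall>D\<in>Dmin n t. 1 \<le> deg D a"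
  proof (intro ballI)
    fix a D assume a: "a \<in> M" and D: "D \<in> Dmin n t"
    then obtain i where i: "a = indm (W t i)" "1 \<le> i" "i \<le> n - t + 1" by (auto simp: M_def)
    have "cov n t D" using D by (simp add: Dmin_def)
    then have ne: "D \<inter> W t i \<noteq> {}" using i(2,3) unfolding cov_def by blast
    have "finite D" using Dfin D by blast
    then show "1 \<le> deg D a" unfolding i(1) by (rule deg_indm) (use ne in \<open>auto simp: W_def\<close>)
  qed
  have char: "(\<exists>g\<in>msum M s. dv g b) \<longleftrightarrow> (\<forall>D\<in>Dmin n t. s \<le> deg D b)"
    if s: "1 \<le> s" and b: "ks b \<subseteq> {1..n}" for s b
  proof
    assume "\<exists>g\<in>msum M s. dv g b"
    then show "\<forall>D\<in>Dmin n t. s \<le> deg D b" using char_fwd[OF Dfin Mdeg] by blast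
  next
    assume H0: "\<forall>D\<in>Dmin n t. s \<le> deg D b"
    have H: "\<forall>D. cov n t D \<longrightarrow> s \<le> (\<Sum>j\<in>D. lk b j)"
    proof (intro allI impI)
      fix D assume D: "cov n t D"
      obtain D' where D': "D' \<in> Dmin n t" "D' \<subseteq> D" using min_sub[OF D] by blast
      have fD: "finite D" using D finite_subset[of D "{1..n}"] by (auto simp: cov_def)
      have "s \<le> deg D' b" using H0 D' by blast
      also have "\<dots> \<le> (\<Sum>j\<in>D. lk b j)" unfolding deg_def by (rule sum_mono2) (use fD D' in auto)
      finally show "s \<le> (\<Sum>j\<in>D. lk b j)" .
    qed
    obtain f where f: "\<forall>k<s. 1 \<le> f k \<and> f k \<le> n - t + 1"
      "\<forall>j. (\<Sum>k<s. if j \<in> W t (f k) then 1 else 0) \<le> lk b j"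
      using C1[OF t H] by blast
    have "\<forall>k<s. (\<lambda>k. indm (W t (f k))) k \<in> M" using f(1) unfolding M_def by blast
    then have "(\<Sum>k<s. indm (W t (f k))) \<in> msum M s" unfolding msum_def
      by (intro CollectI exI[of _ "\<lambda>k. indm (W t (f k))"]) simp
    moreover have "dv (\<Sum>k<s. indm (W t (f k))) b"
      by (rule dv_sum_indm) (use f(2) in \<open>auto simp: W_def\<close>)
    ultimately show "\<exists>g\<in>msum M s. dv g b" by blast
  qed
  show ?thesis unfolding eq by (rule ntf_generic[OF Mn fin Dsub anti char])
qed

lemma dual_case:
  assumes t: "1 \<le> t" "t \<le> n"
  shows "normally_torsion_free n (alexander_dual n (path_sets n t) :: 'k::field mpoly set)"
proof -
  define M where "M = {indm C | C. cov n t C}"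
  have Mn: "\<forall>a\<in>M. ks a \<subseteq> {1..n}"
  proof
    fix a assume "a \<in> M"
    then obtain C where C: "a = indm C" "cov n t C" unfolding M_def by blast
    have "ks (indm C) \<subseteq> C" by (rule ks_indm)
    moreover have "C \<subseteq> {1..n}" using C(2) unfolding cov_def by blast
    ultimately show "ks a \<subseteq> {1..n}" unfolding C(1) by (rule order_trans)
  qed
  have covc: "cov n t C \<longleftrightarrow> C \<subseteq> {1..n} \<and> (\<forall>G\<in>path_sets n t. C \<inter> G \<noteq> {})" for C
    by (auto simp: cov_def path_sets_def W_def)
  have "alexander_dual n (path_sets n t) = gen_ideal n ((mon :: mono \<Rightarrow> 'k mpoly) ` M)"
    unfolding alexander_dual_def M_def
  proof (rule arg_cong[where f="gen_ideal n"])
    show "{xmon C |C. C \<subseteq> {1..n} \<and> (\<forall>G\<in>path_sets n t. C \<inter> G \<noteq> {})} = (mon :: mono \<Rightarrow> 'k mpoly) ` {indm C |C. cov n t C}"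
      unfolding xmon_eq covc by blast
  qed
  also have "\<dots> = mideal n M" by (rule gen_mon_eq[OF Mn])
  finally have eq: "alexander_dual n (path_sets n t) = (mideal n M :: 'k mpoly set)" .
  define Ds where "Ds = W t ` {1..n-t+1}"
  have Dfin: "\<forall>D\<in>Ds. finite D" by (auto simp: Ds_def W_def)
  have fin: "finite Ds" by (simp add: Ds_def)
  have Dsub: "\<forall>D\<in>Ds. D \<subseteq> {1..n} \<and> D \<noteq> {}"
    using t by (auto simp: Ds_def W_def)
  have anti: "\<forall>D\<in>Ds. \<forall>D'\<in>Ds. D' \<subseteq> D \<longrightarrow> D' = D"
  proof (intro ballI impI)
    fix D D' assume "D \<in> Ds" "D' \<in> Ds" "D' \<subseteq> D"
    then obtain i i' where ii: "D = W t i" "D' = W t i'" "W t i' \<subseteq> W t i" by (auto simp: Ds_def)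
    have "i' \<in> W t i'" "i' + t - 1 \<in> W t i'" using t by (auto simp: W_def)
    then have "i' \<in> W t i" "i' + t - 1 \<in> W t i" using ii by auto
    then have "i = i'" using t by (auto simp: W_def)
    then show "D' = D" using ii by simp
  qed
  have Mdeg: "\<forall>a\<in>M. \<forall>D\<in>Ds. 1 \<le> deg D a"
  proof (intro ballI)
    fix a D assume a: "a \<in> M" and D: "D \<in> Ds"
    then obtain C where C: "a = indm C" "cov n t C" by (auto simp: M_def)
    obtain i where i: "D = W t i" "1 \<le> i" "i \<le> n - t + 1" using D by (auto simp: Ds_def)
    have ne: "D \<inter> C \<noteq> {}" using C(2) i unfolding cov_def by blast
    have fC: "finite C" using C(2) finite_subset[of C "{1..n}"] unfolding cov_def by blast
    have "finite D" using Dfin D by blast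
    then show "1 \<le> deg D a" unfolding C(1) by (rule deg_indm) (use ne fC in auto)
  qed
  have char: "(\<exists>g\<in>msum M s. dv g b) \<longleftrightarrow> (\<forall>D\<in>Ds. s \<le> deg D b)"
    if s: "1 \<le> s" and b: "ks b \<subseteq> {1..n}" for s b
  proof
    assume "\<exists>g\<in>msum M s. dv g b"
    then show "\<forall>D\<in>Ds. s \<le> deg D b" using char_fwd[OF Dfin Mdeg] by blast
  next
    assume H0: "\<forall>D\<in>Ds. s \<le> deg D b"
    have H: "\<forall>i. 1 \<le> i \<and> i \<le> n - t + 1 \<longrightarrow> s \<le> (\<Sum>j\<in>W t i. lk b j)"
      using H0 by (auto simp: Ds_def deg_def)
    obtain C where C: "\<forall>r<s. cov n t (C r)" "\<forall>j. (\<Sum>r<s. if j \<in> C r then 1 else 0) \<le> lk b j"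
      using C2[OF t s H] by blast
    have "\<forall>k<s. (\<lambda>k. indm (C k)) k \<in> M" using C(1) unfolding M_def by blast
    then have "(\<Sum>r<s. indm (C r)) \<in> msum M s" unfolding msum_def
      by (intro CollectI exI[of _ "\<lambda>k. indm (C k)"]) simp
    moreover have "dv (\<Sum>r<s. indm (C r)) b"
    proof (rule dv_sum_indm)
      show "\<forall>k<s. finite (C k)" using C(1) finite_subset[of _ "{1..n}"] by (auto simp: cov_def)
    qed (use C(2) in auto)
    ultimately show "\<exists>g\<in>msum M s. dv g b" by blast
  qed
  show ?thesis unfolding eq by (rule ntf_generic[OF Mn fin Dsub anti char])
qed

theorem theorem2p3:
  fixes n t :: nat
  assumes "1 \<le> t" and "t \<le> n"
  shows "normally_torsion_free n (path_ideal n t :: 'k::field mpoly set)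
       \<and> normally_torsion_free n (alexander_dual n (path_sets n t) :: 'k::field mpoly set)"
  using path_case[OF assms] dual_case[OF assms] by blast



end
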